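(* Let $q$ be a prime power, $d\ge1$, and let $P\in\mathbb{F}_q[T]$ be monic irreducible of degree $s$ with $s\mid d$. Let $\sigma$ be a generator of $\mathrm{Gal}(\mathbb{F}_{q^d}/\mathbb{F}_q)$ and order the roots $\rho_1,\dots,\rho_s\in\mathbb{F}_{q^d}$ of $P$ so that $\sigma(\rho_i)=\rho_{i+1}$ for $1\le i<s$ and $\sigma(\rho_s)=\rho_1$. For each $i$ let $\lambda_i$ be a generator of the Carlitz torsion module $C_{q^d}[T-\rho_i]=\{z\in\overline{\mathbb{F}_q(T)}: z^{q^d}+(T-\rho_i)z=0\}$, so that $\lambda_i^{q^d-1}=-(T-\rho_i)$. Let $\tilde\sigma$ be any automorphism of $K_{q^d,P}$ fixing $T$ and restricting to $\sigma$ on $\mathbb{F}_{q^d}$. Then for each $1\le i<s$ one has $\tilde\sigma(\lambda_i)=\zeta_{\sigma,i}\lambda_{i+1}$, and $\tilde\sigma(\lambda_s)=\zeta_{\sigma,s}\lambda_1$, where each $\zeta_{\sigma,i}$ is a $(q^d-1)$st root of unity depending on $\sigma$ (and $\tilde\sigma$) and $i$.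
   Context: $K_{q^d,P}$ is the field obtained from $\mathbb{F}_{q^d}(T)$ by adjoining all $u\in\overline{\mathbb{F}_q(T)}$ with $C_{q^d}(P)(u)=0$, where the Carlitz action is $C_{q^d}(T)(u)=Tu+u^{q^d}$ extended $\mathbb{F}_{q^d}$-linearly to polynomials; $K_{q^d,P}/\mathbb{F}_q(T)$ is Galois, and $K_{q^d,P}$ contains all $\lambda_i$. *)

theory Defs
  imports "HOL-Computational_Algebra.Polynomial" "HOL-Computational_Algebra.Primes"
begin

definition is_subfield :: "'a::field set \<Rightarrow> bool" where
  "is_subfield S \<longleftrightarrow> 0 \<in> S \<and> 1 \<in> S \<and>
     (\<forall>x\<in>S. \<forall>y\<in>S. x + y \<in> S \<and> x * y \<in> S) \<and>
     (\<forall>x\<in>S. - x \<in> S \<and> inverse x \<in> S)"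

definition gen_field :: "'a::field set \<Rightarrow> 'a set" where
  "gen_field X = \<Inter>{S. is_subfield S \<and> X \<subseteq> S}"

definition algebraically_closed_type :: "'a::field itself \<Rightarrow> bool" where
  "algebraically_closed_type _ \<longleftrightarrow> (\<forall>p :: 'a poly. degree p > 0 \<longrightarrow> (\<exists>x. poly p x = 0))"

definition poly_over :: "'a::zero set \<Rightarrow> 'a poly \<Rightarrow> bool" where
  "poly_over S p \<longleftrightarrow> set (coeffs p) \<subseteq> S"

definition irreducible_over :: "'a::field set \<Rightarrow> 'a poly \<Rightarrow> bool" where
  "irreducible_over S p \<longleftrightarrow> poly_over S p \<and> degree p \<ge> 1 \<and>
     (\<forall>a b. poly_over S a \<and> poly_over S b \<and> p = a * b \<longrightarrow> degree a = 0 \<or> degree b = 0)"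

definition prime_power :: "nat \<Rightarrow> bool" where
  "prime_power q \<longleftrightarrow> (\<exists>p k. prime p \<and> k > 0 \<and> q = p ^ k)"

definition carlitz_T :: "'a::field \<Rightarrow> nat \<Rightarrow> 'a \<Rightarrow> 'a" where
  "carlitz_T T Q u = T * u + u ^ Q"

(* C_Q(a)(u) for a = \<Sum> a_i T^i (a represented by its coefficient polynomial),
   extended linearly: C(a)(u) = \<Sum> a_i C(T)^i (u) *)
definition carlitz :: "'a::field \<Rightarrow> nat \<Rightarrow> 'a poly \<Rightarrow> 'a \<Rightarrow> 'a" where
  "carlitz T Q a u = (\<Sum>i\<le>degree a. coeff a i * (carlitz_T T Q ^^ i) u)"

definition carlitz_torsion_lin :: "'a::field \<Rightarrow> nat \<Rightarrow> 'a \<Rightarrow> 'a set" where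
  "carlitz_torsion_lin T Q \<rho> = {z. z ^ Q + (T - \<rho>) * z = 0}"

definition carlitz_generator :: "'a::field set \<Rightarrow> 'a \<Rightarrow> nat \<Rightarrow> 'a \<Rightarrow> 'a \<Rightarrow> bool" where
  "carlitz_generator F T Q \<rho> lam \<longleftrightarrow> lam \<in> carlitz_torsion_lin T Q \<rho> \<and>
     (\<forall>z \<in> carlitz_torsion_lin T Q \<rho>. \<exists>a. poly_over F a \<and> z = carlitz T Q a lam)"

definition K_field :: "'a::field set \<Rightarrow> 'a \<Rightarrow> nat \<Rightarrow> 'a poly \<Rightarrow> 'a set" where
  "K_field F T Q P = gen_field (F \<union> {T} \<union> {u. carlitz T Q P u = 0})"

definition field_aut_on :: "'a::field set \<Rightarrow> ('a \<Rightarrow> 'a) \<Rightarrow> bool" where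
  "field_aut_on S f \<longleftrightarrow> bij_betw f S S \<and>
     (\<forall>x\<in>S. \<forall>y\<in>S. f (x + y) = f x + f y \<and> f (x * y) = f x * f y)"

definition gal_generator :: "'a::field set \<Rightarrow> 'a set \<Rightarrow> ('a \<Rightarrow> 'a) \<Rightarrow> bool" where
  "gal_generator F Fq \<sigma> \<longleftrightarrow> field_aut_on F \<sigma> \<and> (\<forall>x\<in>Fq. \<sigma> x = x) \<and>
     (\<forall>\<tau>. field_aut_on F \<tau> \<and> (\<forall>x\<in>Fq. \<tau> x = x) \<longrightarrow> (\<exists>k. \<forall>x\<in>F. \<tau> x = (\<sigma> ^^ k) x))"

end

theory Submission imports Defs begin

lemma gen_field_sub: "is_subfield (gen_field X)"
  unfolding gen_field_def is_subfield_def by auto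

lemma gen_field_incl: "X \<subseteq> gen_field X"
  unfolding gen_field_def by auto

lemma sf_minus: "is_subfield K \<Longrightarrow> x \<in> K \<Longrightarrow> y \<in> K \<Longrightarrow> x - y \<in> K"
  unfolding is_subfield_def by (metis diff_conv_add_uminus)

lemma sf_power: "is_subfield K \<Longrightarrow> x \<in> K \<Longrightarrow> x ^ n \<in> K"
  by (induction n) (auto simp: is_subfield_def)

lemma aut_zero: assumes "is_subfield K" "field_aut_on K f" shows "f 0 = 0"
proof -
  have "0 \<in> K" using assms(1) by (simp add: is_subfield_def)
  then have "f (0 + 0) = f 0 + f 0" using assms(2) unfolding field_aut_on_def by blast
  then show ?thesis by (metis add.right_neutral add_left_cancel)
qed

lemma aut_uminus: assumes "is_subfield K" "field_aut_on K f" "x \<in> K" shows "f (- x) = - f x"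
proof -
  have "- x \<in> K" using assms by (simp add: is_subfield_def)
  then have "f (x + - x) = f x + f (- x)" using assms unfolding field_aut_on_def by blast
  then show ?thesis using aut_zero[OF assms(1,2)] by (simp add: eq_neg_iff_add_eq_0 add.commute)
qed

lemma aut_diff: assumes "is_subfield K" "field_aut_on K f" "x \<in> K" "y \<in> K" shows "f (x - y) = f x - f y"
proof -
  have "- y \<in> K" using assms by (simp add: is_subfield_def)
  then have "f (x + - y) = f x + f (- y)" using assms unfolding field_aut_on_def by blast
  then show ?thesis using aut_uminus[OF assms(1,2,4)] by simp
qed

lemma aut_nz: assumes "is_subfield K" "field_aut_on K f" "x \<in> K" "x \<noteq> 0" shows "f x \<noteq> 0"
proof
  assume "f x = 0"
  then have "f x = f 0" using aut_zero[OF assms(1,2)] by simp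
  moreover have "0 \<in> K" using assms(1) by (simp add: is_subfield_def)
  moreover have "inj_on f K" using assms(2) unfolding field_aut_on_def bij_betw_def by simp
  ultimately have "x = 0" using assms(3) unfolding inj_on_def by blast
  then show False using assms(4) by simp
qed

lemma aut_one: assumes "is_subfield K" "field_aut_on K f" shows "f 1 = 1"
proof -
  have o: "1 \<in> K" using assms(1) by (simp add: is_subfield_def)
  have "f (1 * 1) = f 1 * f 1" using assms(2) o unfolding field_aut_on_def by blast
  then have "f 1 = f 1 * f 1" by simp
  moreover have "f 1 \<noteq> 0" using aut_nz[OF assms o] by simp
  ultimately show ?thesis by (metis mult_cancel_left1)
qed

lemma aut_power: assumes "is_subfield K" "field_aut_on K f" "x \<in> K" shows "f (x ^ n) = f x ^ n"
proof (induction n)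
  case 0
  then show ?case using aut_one[OF assms(1,2)] by simp
next
  case (Suc n)
  have "x ^ n \<in> K" using sf_power assms by blast
  then have "f (x * x ^ n) = f x * f (x ^ n)" using assms unfolding field_aut_on_def by blast
  then show ?case using Suc by simp
qed

lemma fermat_sub:
  assumes "is_subfield F" "finite F" "c \<in> F" shows "c ^ card F = c"
proof (cases "c = 0")
  case True
  have "card F > 0" using assms by (auto simp: card_gt_0_iff)
  then show ?thesis using True by simp
next
  case False
  define S where "S = F - {0}"
  have finS: "finite S" using assms S_def by simp
  have img: "(\<lambda>x. c * x) ` S = S"
  proof
    show "(\<lambda>x. c * x) ` S \<subseteq> S" using assms False unfolding S_def is_subfield_def by auto
    show "S \<subseteq> (\<lambda>x. c * x) ` S"
    proof
      fix y assume y: "y \<in> S"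
      have "inverse c * y \<in> S" using y assms False unfolding S_def is_subfield_def by auto
      moreover have "y = c * (inverse c * y)" using False by simp
      ultimately show "y \<in> (\<lambda>x. c * x) ` S" by blast
    qed
  qed
  have inj: "inj_on (\<lambda>x. c * x) S" using False by (auto simp: inj_on_def)
  have "(\<Prod>x\<in>S. c * x) = (\<Prod>y\<in>(\<lambda>x. c * x) ` S. y)"
    using prod.reindex[OF inj, of "\<lambda>y. y"] by simp
  also have "\<dots> = \<Prod>S" using img by simp
  finally have "c ^ card S * \<Prod>S = \<Prod>S" by (simp add: prod.distrib)
  moreover have "\<Prod>S \<noteq> 0" using finS unfolding S_def by (simp add: prod_zero_iff)
  ultimately have "c ^ card S = 1" by simp
  moreover have "card F = Suc (card S)"
  proof -
    have z: "0 \<in> F" using assms(1) by (simp add: is_subfield_def)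
    then have "card S = card F - 1" using S_def by (simp add: card_Diff_singleton)
    moreover have "card F > 0" using z assms(2) by (auto simp: card_gt_0_iff)
    ultimately show ?thesis by simp
  qed
  ultimately show ?thesis by simp
qed

lemma iter_eig:
  assumes "\<rho> ^ Q = \<rho>" "carlitz_T T Q u = \<rho> * u"
  shows "(carlitz_T T Q ^^ n) u = \<rho> ^ n * u"
proof (induction n)
  case (Suc n)
  have r: "(\<rho> ^ n) ^ Q = \<rho> ^ n" using assms(1) by (metis power_mult mult.commute)
  have "carlitz_T T Q (\<rho> ^ n * u) = \<rho> ^ n * carlitz_T T Q u"
    unfolding carlitz_T_def power_mult_distrib r by (simp add: algebra_simps)
  then show ?case using Suc assms(2) by simp
qed simp

lemma key:
  assumes K: "is_subfield K" and f: "field_aut_on K f"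
    and mem: "lam \<in> K" "T \<in> K" "\<rho> \<in> K" and fT: "f T = T"
    and lam0: "lam \<noteq> 0" and eq1: "lam ^ Q + (T - \<rho>) * lam = 0"
    and lam2: "lam2 \<noteq> 0" "lam2 ^ Q + (T - f \<rho>) * lam2 = 0" and Q: "Q \<ge> 1"
  shows "\<exists>\<zeta>. \<zeta> ^ (Q - 1) = 1 \<and> f lam = \<zeta> * lam2"
proof -
  define \<mu> where "\<mu> = f lam"
  have inK: "lam ^ Q \<in> K" "(T - \<rho>) * lam \<in> K" "T - \<rho> \<in> K"
    using K mem sf_power sf_minus unfolding is_subfield_def by blast+
  have "f (lam ^ Q + (T - \<rho>) * lam) = f (lam ^ Q) + f ((T - \<rho>) * lam)"
    using f inK unfolding field_aut_on_def by blast
  also have "\<dots> = \<mu> ^ Q + (T - f \<rho>) * \<mu>"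
    using f inK mem aut_power[OF K f] aut_diff[OF K f] fT unfolding field_aut_on_def \<mu>_def by simp
  finally have e: "\<mu> ^ Q + (T - f \<rho>) * \<mu> = 0" using eq1 aut_zero[OF K f] by simp
  have mu0: "\<mu> \<noteq> 0" using aut_nz[OF K f mem(1) lam0] \<mu>_def by simp
  obtain m where Qm: "Q = Suc m" using Q by (cases Q) auto
  have a: "\<mu> ^ m = -(T - f \<rho>)" using e mu0 Qm
    by (metis (no_types, lifting) add_eq_0_iff2 mult.commute mult_cancel_left power_Suc2 mult_minus_left)
  have b: "lam2 ^ m = -(T - f \<rho>)" using lam2 Qm
    by (metis (no_types, lifting) add_eq_0_iff2 mult.commute mult_cancel_left power_Suc2 mult_minus_left)
  have nz: "lam2 ^ m \<noteq> 0" using lam2 by simp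
  have "(\<mu> / lam2) ^ (Q - 1) = 1" using a b nz Qm by (simp add: power_divide)
  moreover have "f lam = (\<mu> / lam2) * lam2" using lam2 \<mu>_def by simp
  ultimately show ?thesis by blast
qed

theorem lemma3p1:
  fixes q d s :: nat and Fq F :: "'a::field set" and T :: 'a and P :: "'a poly"
    and \<sigma> \<sigma>' :: "'a \<Rightarrow> 'a" and \<rho> lam :: "nat \<Rightarrow> 'a"
  assumes alg_closed: "algebraically_closed_type TYPE('a)"
    and q: "prime_power q" and d: "d \<ge> 1"
    and Fq: "is_subfield Fq" "card Fq = q"
    and F: "is_subfield F" "card F = q ^ d" "Fq \<subseteq> F"
    and T_transc: "\<forall>p. p \<noteq> 0 \<and> poly_over F p \<longrightarrow> poly p T \<noteq> 0"
    and P: "lead_coeff P = 1" "irreducible_over Fq P" "degree P = s" "s dvd d"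
    and \<sigma>: "gal_generator F Fq \<sigma>"
    and \<rho>_roots: "\<rho> ` {1..s} = {x \<in> F. poly P x = 0}" "inj_on \<rho> {1..s}"
    and \<rho>_cycle: "\<forall>i. 1 \<le> i \<and> i < s \<longrightarrow> \<sigma> (\<rho> i) = \<rho> (i + 1)" "\<sigma> (\<rho> s) = \<rho> 1"
    and lam: "\<forall>i\<in>{1..s}. carlitz_generator F T (q ^ d) (\<rho> i) (lam i)"
    and \<sigma>': "field_aut_on (K_field F T (q ^ d) P) \<sigma>'" "\<sigma>' T = T"
      "\<forall>x\<in>F. \<sigma>' x = \<sigma> x"
  shows "(\<forall>i. 1 \<le> i \<and> i < s \<longrightarrow>
            (\<exists>\<zeta>. \<zeta> ^ (q ^ d - 1) = 1 \<and> \<sigma>' (lam i) = \<zeta> * lam (i + 1)))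
       \<and> (\<exists>\<zeta>. \<zeta> ^ (q ^ d - 1) = 1 \<and> \<sigma>' (lam s) = \<zeta> * lam 1)"
proof -
  define Q where "Q = q ^ d"
  define K where "K = K_field F T (q ^ d) P"
  have K: "is_subfield K" unfolding K_def K_field_def by (rule gen_field_sub)
  have FK: "F \<subseteq> K" and TK: "T \<in> K" and CK: "{u. carlitz T Q P u = 0} \<subseteq> K"
  proof -
    have "F \<union> {T} \<union> {u. carlitz T (q ^ d) P u = 0} \<subseteq> K"
      unfolding K_def K_field_def by (rule gen_field_incl)
    then show "F \<subseteq> K" "T \<in> K" "{u. carlitz T Q P u = 0} \<subseteq> K" unfolding Q_def by auto
  qed
  have q2: "q \<ge> 2"
  proof -
    obtain p k where pk: "prime p" "k > 0" "q = p ^ k" using q unfolding prime_power_def by blast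
    have "p \<ge> 2" using pk(1) by (rule prime_ge_2_nat)
    moreover have "p \<le> p ^ k" using pk(2) \<open>p \<ge> 2\<close> by (simp add: self_le_power)
    ultimately show ?thesis using pk(3) by simp
  qed
  have Q2: "Q \<ge> 2"
  proof -
    have "q \<le> q ^ d" using q2 d by (simp add: self_le_power)
    then show ?thesis using q2 Q_def by simp
  qed
  have finF: "finite F" using F(2) q2 by (intro card_ge_0_finite) simp
  have ferm: "\<And>c. c \<in> F \<Longrightarrow> c ^ Q = c" using fermat_sub[OF F(1) finF] F(2) Q_def by simp
  have s1: "s \<ge> 1" using P(2,3) unfolding irreducible_over_def by simp
  have rhoF: "\<And>i. i \<in> {1..s} \<Longrightarrow> \<rho> i \<in> F \<and> poly P (\<rho> i) = 0" using \<rho>_roots(1) by blast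
  have Tne: "\<And>r. r \<in> F \<Longrightarrow> T - r \<noteq> 0"
  proof
    fix r assume r: "r \<in> F" "T - r = 0"
    have "poly_over F [:-r, 1:]" using r F(1) unfolding poly_over_def is_subfield_def by auto
    moreover have "[:-r, 1:] \<noteq> 0" by simp
    ultimately have "poly [:-r, 1:] T \<noteq> 0" using T_transc by blast
    then show False using r by simp
  qed
  have lamprops: "lam i \<in> K \<and> lam i \<noteq> 0 \<and> lam i ^ Q + (T - \<rho> i) * lam i = 0" if i: "i \<in> {1..s}" for i
  proof -
    have gen: "carlitz_generator F T Q (\<rho> i) (lam i)" using lam i Q_def by simp
    have eq: "lam i ^ Q + (T - \<rho> i) * lam i = 0"
      using gen unfolding carlitz_generator_def carlitz_torsion_lin_def by simp
    have nz: "lam i \<noteq> 0"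
    proof
      assume l0: "lam i = 0"
      define p where "p = monom 1 (Q - 1) + [:T - \<rho> i:]"
      have "degree p = Q - 1" unfolding p_def using Q2
        by (subst degree_add_eq_left) (auto simp: degree_monom_eq)
      then have "degree p > 0" using Q2 by simp
      then obtain z where "poly p z = 0" using alg_closed unfolding algebraically_closed_type_def by blast
      then have z: "z ^ (Q - 1) + (T - \<rho> i) = 0" unfolding p_def by (simp add: poly_monom)
      have z0: "z \<noteq> 0" using z Tne rhoF[OF i] Q2 by (auto simp: power_0_left)
      have "z ^ Q + (T - \<rho> i) * z = z * (z ^ (Q - 1) + (T - \<rho> i))" using Q2
        by (metis (no_types, lifting) One_nat_def Suc_pred distrib_left less_le_trans mult.commute pos2 power_Suc2)
      then have "z \<in> carlitz_torsion_lin T Q (\<rho> i)" using z unfolding carlitz_torsion_lin_def by simp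
      then obtain a where "z = carlitz T Q a (lam i)" using gen unfolding carlitz_generator_def by blast
      moreover have "\<And>n. (carlitz_T T Q ^^ n) 0 = 0"
      proof -
        fix n show "(carlitz_T T Q ^^ n) 0 = 0"
          by (induction n) (use Q2 in \<open>auto simp: carlitz_T_def\<close>)
      qed
      ultimately have "z = 0" using l0 unfolding carlitz_def by simp
      then show False using z0 by simp
    qed
    have ev: "carlitz_T T Q (lam i) = \<rho> i * lam i" using eq unfolding carlitz_T_def
      by (simp add: algebra_simps)
    have "carlitz T Q P (lam i) = (\<Sum>j\<le>degree P. coeff P j * (\<rho> i ^ j * lam i))"
      unfolding carlitz_def using iter_eig[OF ferm ev] rhoF[OF i] by simp
    also have "\<dots> = poly P (\<rho> i) * lam i"
      by (simp add: poly_altdef sum_distrib_right mult.assoc)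
    finally have "carlitz T Q P (lam i) = 0" using rhoF[OF i] by simp
    then show ?thesis using CK eq nz by blast
  qed
  have step: "\<exists>\<zeta>. \<zeta> ^ (q ^ d - 1) = 1 \<and> \<sigma>' (lam i) = \<zeta> * lam j"
    if i: "i \<in> {1..s}" and j: "j \<in> {1..s}" and sj: "\<sigma> (\<rho> i) = \<rho> j" for i j
  proof -
    have "\<sigma>' (\<rho> i) = \<rho> j" using \<sigma>'(3) rhoF[OF i] sj by simp
    then show ?thesis
      using key[OF K \<sigma>'(1)[folded K_def], of "lam i" T "\<rho> i" Q "lam j"] lamprops[OF i] lamprops[OF j]
        TK FK rhoF[OF i] \<sigma>'(2) Q2 Q_def by auto
  qed
  show ?thesis
  proof
    show "\<forall>i. 1 \<le> i \<and> i < s \<longrightarrow> (\<exists>\<zeta>. \<zeta> ^ (q ^ d - 1) = 1 \<and> \<sigma>' (lam i) = \<zeta> * lam (i + 1))"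
      using step \<rho>_cycle(1) by auto
    show "\<exists>\<zeta>. \<zeta> ^ (q ^ d - 1) = 1 \<and> \<sigma>' (lam s) = \<zeta> * lam 1"
      using step[of s 1] \<rho>_cycle(2) s1 by auto
  qed
qed

end
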